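(* Let $a\in\mathbb{R}$ and $w\in\mathbb{C}\setminus\mathbb{R}$ with $(a,w)\in D_c$, and suppose $\varphi := |\operatorname{Arg}(w)|\in(\pi/2,\pi)$. Then $\tau_c(a,w) > 1$ if and only if one of the following holds: (i) $a \ge 0$ and $|w| < R_2(-a;\varphi)$; (ii) $-M(\varphi) < a < 0$ and $R_1(-a;\varphi) < |w| < R_2(-a;\varphi)$.
   Context: $\operatorname{Arg}(w)\in(-\pi,\pi]$ is the principal argument; $\arccos:[-1,1]\to[0,\pi]$. $D_c := \{(a,w)\in\mathbb{R}\times(\mathbb{C}\setminus\{0\}):\operatorname{Re}(w)<a<|w|\}$, and $\tau_c(a,w) := \frac{1}{\sqrt{|w|^2-a^2}}[|\operatorname{Arg}(w)|-\arccos(a/|w|)]$. For $\varphi\in(\pi/2,\pi)$: $C(\theta;\varphi) := \theta\cot(\theta-\varphi)$ on $[0,\varphi)$; $S(\varphi)\in(0,\varphi)$ is the unique solution of $\sin(2\theta-2\varphi) = 2\theta$; $C(\cdot;\varphi)$ is strictly increasing on $[0,S(\varphi)]$ and strictly decreasing on $[S(\varphi),\varphi)$ with maximum $M(\varphi) := \cos^2(S(\varphi)-\varphi)$, $C(0;\varphi)=0$, and $C(\theta;\varphi)\to-\infty$ as $\theta\uparrow\varphi$. $C_1^{-1}(\cdot;\varphi):[0,M(\varphi)]\to[0,S(\varphi)]$ and $C_2^{-1}(\cdot;\varphi):(-\infty,M(\varphi)]\to[S(\varphi),\varphi)$ are the inverses of the restrictions of $C(\cdot;\varphi)$ to $[0,S(\varphi)]$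 and $[S(\varphi),\varphi)$. $R_j(r;\varphi) := -C_j^{-1}(r;\varphi)/\sin(C_j^{-1}(r;\varphi)-\varphi)$ for $j=1,2$ on the respective domains. *)

theory Defs
  imports "HOL-Analysis.Analysis"
begin

definition Dc :: "(real \<times> complex) set" where
  "Dc = {(a, w). w \<noteq> 0 \<and> Re w < a \<and> a < cmod w}"

definition tau_c :: "real \<Rightarrow> complex \<Rightarrow> real" where
  "tau_c a w = (1 / sqrt ((cmod w)\<^sup>2 - a\<^sup>2)) * (\<bar>Arg w\<bar> - arccos (a / cmod w))"

definition Cfun :: "real \<Rightarrow> real \<Rightarrow> real" where
  "Cfun \<theta> \<phi> = \<theta> * cot (\<theta> - \<phi>)"

definition Sfun :: "real \<Rightarrow> real" where
  "Sfun \<phi> = (THE \<theta>. 0 < \<theta> \<and> \<theta> < \<phi> \<and> sin (2*\<theta> - 2*\<phi>) = 2*\<theta>)"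

definition Mfun :: "real \<Rightarrow> real" where
  "Mfun \<phi> = (cos (Sfun \<phi> - \<phi>))\<^sup>2"

definition C1inv :: "real \<Rightarrow> real \<Rightarrow> real" where
  "C1inv r \<phi> = (THE \<theta>. 0 \<le> \<theta> \<and> \<theta> \<le> Sfun \<phi> \<and> Cfun \<theta> \<phi> = r)"

definition C2inv :: "real \<Rightarrow> real \<Rightarrow> real" where
  "C2inv r \<phi> = (THE \<theta>. Sfun \<phi> \<le> \<theta> \<and> \<theta> < \<phi> \<and> Cfun \<theta> \<phi> = r)"

definition R1 :: "real \<Rightarrow> real \<Rightarrow> real" where
  "R1 r \<phi> = - C1inv r \<phi> / sin (C1inv r \<phi> - \<phi>)"

definition R2 :: "real \<Rightarrow> real \<Rightarrow> real" where
  "R2 r \<phi> = - C2inv r \<phi> / sin (C2inv r \<phi> - \<phi>)"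

end

theory Submission
  imports Defs
begin

definition hf :: "real \<Rightarrow> real \<Rightarrow> real" where
  "hf \<phi> t = sin (2*t - 2*\<phi>) - 2*t"

lemma hf_deriv: "DERIV (hf \<phi>) t :> - 4 * (sin (t - \<phi>))\<^sup>2"
proof -
  have D: "DERIV (hf \<phi>) t :> cos (2*t - 2*\<phi>) * (2 - 0) - 2"
    unfolding hf_def by (auto intro!: derivative_eq_intros)
  have "cos (2*t - 2*\<phi>) = 1 - 2 * (sin (t - \<phi>))\<^sup>2"
    using cos_double_sin[of "t - \<phi>"] by (simp add: algebra_simps)
  then have E: "cos (2*t - 2*\<phi>) * (2 - 0) - 2 = - 4 * (sin (t - \<phi>))\<^sup>2" by simp
  show ?thesis using DERIV_cong[OF D E] .
qed

lemma sin_tphi_neg: "\<phi> < pi \<Longrightarrow> \<phi> - pi < t \<Longrightarrow> t < \<phi> \<Longrightarrow> sin (t - \<phi>) < 0"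
  using sin_gt_zero[of "\<phi> - t"] by (simp add: sin_diff[symmetric]) (metis minus_diff_eq neg_less_0_iff_less sin_minus)

lemma hf_cont: "continuous_on A (hf \<phi>)"
  unfolding hf_def by (intro continuous_intros)

lemma hf_strict_dec:
  assumes "\<phi> < pi" "0 \<le> \<phi>" "0 \<le> x" "x < y" "y \<le> \<phi>"
  shows "hf \<phi> y < hf \<phi> x"
proof (rule DERIV_neg_imp_decreasing_open[OF assms(4)])
  fix t assume "x < t" "t < y"
  then have "sin (t - \<phi>) < 0" using assms by (intro sin_tphi_neg) auto
  then show "\<exists>d. DERIV (hf \<phi>) t :> d \<and> d < 0"
    using hf_deriv by (intro exI[of _ "- 4 * (sin (t - \<phi>))\<^sup>2"]) (auto simp: power2_eq_square mult_neg_neg)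
qed (rule hf_cont)

lemma hf0: assumes "pi/2 < \<phi>" "\<phi> < pi" shows "hf \<phi> 0 > 0"
proof -
  have "sin (2*pi - 2*\<phi>) > 0" using assms by (intro sin_gt_zero) auto
  moreover have "sin (2*pi - 2*\<phi>) = sin (- 2*\<phi>)"
    using sin_periodic[of "-2*\<phi>"] by (simp add: algebra_simps)
  ultimately show ?thesis by (simp add: hf_def)
qed

lemma hfphi: assumes "0 < \<phi>" shows "hf \<phi> \<phi> < 0"
  using assms by (simp add: hf_def)

lemma S_props:
  assumes "pi/2 < \<phi>" "\<phi> < pi"
  shows "0 < Sfun \<phi>" "Sfun \<phi> < \<phi>" "hf \<phi> (Sfun \<phi>) = 0"
proof -
  obtain s where s: "0 \<le> s" "s \<le> \<phi>" "hf \<phi> s = 0"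
    using IVT2'[of "hf \<phi>" \<phi> 0 0, OF less_imp_le[OF hfphi] less_imp_le[OF hf0[OF assms]]] assms
      hf_cont by force
  have s0: "s \<noteq> 0" using s hf0[OF assms] by auto
  have s1: "s \<noteq> \<phi>" using s hfphi[of \<phi>] assms by auto
  have P: "0 < s \<and> s < \<phi> \<and> sin (2 * s - 2*\<phi>) = 2 * s" using s s0 s1 by (auto simp: hf_def)
  have "Sfun \<phi> = s"
    unfolding Sfun_def
  proof (rule the_equality)
    show "0 < s \<and> s < \<phi> \<and> sin (2 * s - 2*\<phi>) = 2 * s" using P .
  next
    fix u assume u: "0 < u \<and> u < \<phi> \<and> sin (2*u - 2*\<phi>) = 2*u"
    then have hu: "hf \<phi> u = 0" by (simp add: hf_def)
    show "u = s"
    proof (rule ccontr)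
      assume "u \<noteq> s"
      then consider "u < s" | "s < u" by linarith
      then show False
      proof cases
        case 1 then show ?thesis using hf_strict_dec[of \<phi> u s] u s hu assms by auto
      next
        case 2 then show ?thesis using hf_strict_dec[of \<phi> s u] u s hu assms by auto
      qed
    qed
  qed
  then show "0 < Sfun \<phi>" "Sfun \<phi> < \<phi>" "hf \<phi> (Sfun \<phi>) = 0" using P s by auto
qed

lemma hf_pos: assumes "pi/2 < \<phi>" "\<phi> < pi" "0 \<le> t" "t < Sfun \<phi>" shows "hf \<phi> t > 0"
  using hf_strict_dec[of \<phi> t "Sfun \<phi>"] S_props[OF assms(1,2)] assms by auto

lemma hf_neg: assumes "pi/2 < \<phi>" "\<phi> < pi" "Sfun \<phi> < t" "t \<le> \<phi>" shows "hf \<phi> t < 0"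
  using hf_strict_dec[of \<phi> "Sfun \<phi>" t] S_props[OF assms(1,2)] assms by auto

lemma C_deriv:
  assumes "sin (t - \<phi>) \<noteq> 0"
  shows "DERIV (\<lambda>u. Cfun u \<phi>) t :> hf \<phi> t / (2 * (sin (t - \<phi>))\<^sup>2)"
proof -
  have D: "DERIV (\<lambda>u. Cfun u \<phi>) t :> 1 * cot (t - \<phi>) + t * (- inverse ((sin (t - \<phi>))\<^sup>2) * (1 - 0))"
  proof -
    have c: "DERIV (\<lambda>u. cot (u - \<phi>)) t :> - inverse ((sin (t - \<phi>))\<^sup>2) * (1 - 0)"
      by (rule DERIV_chain2[where g="\<lambda>u. u - \<phi>", OF DERIV_cot[OF assms]]) (auto intro!: derivative_eq_intros)
    have "DERIV (\<lambda>u. u * cot (u - \<phi>)) t :> 1 * cot (t - \<phi>) + t * (- inverse ((sin (t - \<phi>))\<^sup>2) * (1 - 0))"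
      by (rule DERIV_cong[OF DERIV_mult[OF DERIV_ident c]]) (simp add: algebra_simps)
    then show ?thesis unfolding Cfun_def .
  qed
  have "sin (2*t - 2*\<phi>) = 2 * sin (t - \<phi>) * cos (t - \<phi>)"
    using sin_double[of "t - \<phi>"] by (simp add: algebra_simps)
  then have E: "1 * cot (t - \<phi>) + t * (- inverse ((sin (t - \<phi>))\<^sup>2) * (1 - 0)) = hf \<phi> t / (2 * (sin (t - \<phi>))\<^sup>2)"
    using assms by (simp add: hf_def cot_def field_simps power2_eq_square)
  show ?thesis using DERIV_cong[OF D E] .
qed

lemma C_cont:
  assumes "\<phi> < pi" "\<phi> - pi < x" "y < \<phi>"
  shows "continuous_on {x..y} (\<lambda>u. Cfun u \<phi>)"
proof (rule continuous_at_imp_continuous_on, clarify)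
  fix t assume "t \<in> {x..y}"
  then have "sin (t - \<phi>) \<noteq> 0" using sin_tphi_neg[of \<phi> t] assms by auto
  then show "isCont (\<lambda>u. Cfun u \<phi>) t" using C_deriv DERIV_isCont by blast
qed

lemma C_inc:
  assumes "pi/2 < \<phi>" "\<phi> < pi" "0 \<le> x" "x < y" "y \<le> Sfun \<phi>"
  shows "Cfun x \<phi> < Cfun y \<phi>"
proof (rule DERIV_pos_imp_increasing_open[OF assms(4)])
  note S = S_props[OF assms(1,2)]
  fix t assume t: "x < t" "t < y"
  then have "sin (t - \<phi>) < 0" using assms S by (intro sin_tphi_neg) auto
  moreover have "hf \<phi> t > 0" using hf_pos[OF assms(1,2)] t assms by auto
  ultimately show "\<exists>d. DERIV (\<lambda>u. Cfun u \<phi>) t :> d \<and> d > 0"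
    using C_deriv by (intro exI[of _ "hf \<phi> t / (2 * (sin (t - \<phi>))\<^sup>2)"]) auto
next
  show "continuous_on {x..y} (\<lambda>u. Cfun u \<phi>)"
    using S_props[OF assms(1,2)] assms by (intro C_cont) auto
qed

lemma C_dec:
  assumes "pi/2 < \<phi>" "\<phi> < pi" "Sfun \<phi> \<le> x" "x < y" "y < \<phi>"
  shows "Cfun y \<phi> < Cfun x \<phi>"
proof (rule DERIV_neg_imp_decreasing_open[OF assms(4)])
  note S = S_props[OF assms(1,2)]
  fix t assume t: "x < t" "t < y"
  then have "sin (t - \<phi>) < 0" using assms S by (intro sin_tphi_neg) auto
  moreover have "hf \<phi> t < 0" using hf_neg[OF assms(1,2)] t assms by auto
  ultimately show "\<exists>d. DERIV (\<lambda>u. Cfun u \<phi>) t :> d \<and> d < 0"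
    using C_deriv by (intro exI[of _ "hf \<phi> t / (2 * (sin (t - \<phi>))\<^sup>2)"]) (auto simp: divide_neg_pos)
next
  show "continuous_on {x..y} (\<lambda>u. Cfun u \<phi>)"
    using S_props[OF assms(1,2)] assms by (intro C_cont) auto
qed

lemma C0: "Cfun 0 \<phi> = 0" by (simp add: Cfun_def)

lemma C_half: "Cfun (\<phi> - pi/2) \<phi> = 0" by (simp add: Cfun_def cot_def)

lemma C_S: assumes "pi/2 < \<phi>" "\<phi> < pi" shows "Cfun (Sfun \<phi>) \<phi> = Mfun \<phi>"
proof -
  note S = S_props[OF assms]
  let ?s = "Sfun \<phi>"
  have sn: "sin (?s - \<phi>) \<noteq> 0" using sin_tphi_neg[of \<phi> ?s] S assms by auto
  have "sin (2 * ?s - 2*\<phi>) = 2 * sin (?s - \<phi>) * cos (?s - \<phi>)"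
    using sin_double[of "?s - \<phi>"] by (simp add: algebra_simps)
  then have "?s = sin (?s - \<phi>) * cos (?s - \<phi>)" using S(3) by (simp add: hf_def)
  then have "Cfun ?s \<phi> = (sin (?s - \<phi>) * cos (?s - \<phi>)) * cos (?s - \<phi>) / sin (?s - \<phi>)"
    unfolding Cfun_def cot_def by (metis times_divide_eq_right)
  then show ?thesis using sn by (simp add: Mfun_def power2_eq_square)
qed

lemma S_lt_half: assumes "pi/2 < \<phi>" "\<phi> < pi" shows "Sfun \<phi> < \<phi> - pi/2"
proof (rule ccontr)
  assume "\<not> ?thesis"
  then show False using C_inc[OF assms, of 0 "\<phi> - pi/2"] assms C0 C_half by auto
qed

lemma C_nonneg: assumes "pi/2 < \<phi>" "\<phi> < pi" "0 \<le> t" "t \<le> Sfun \<phi>" shows "Cfun t \<phi> \<ge> 0"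
  using C_inc[OF assms(1,2), of 0 t] assms C0 by (cases "t = 0") auto

lemma C_pos: assumes "pi/2 < \<phi>" "\<phi> < pi" "0 < t" "t \<le> Sfun \<phi>" shows "Cfun t \<phi> > 0"
  using C_inc[OF assms(1,2), of 0 t] assms C0 by auto

lemma C_le_M: assumes "pi/2 < \<phi>" "\<phi> < pi" "0 \<le> t" "t < \<phi>" shows "Cfun t \<phi> \<le> Mfun \<phi>"
  using C_inc[OF assms(1,2), of t "Sfun \<phi>"] C_dec[OF assms(1,2), of "Sfun \<phi>" t] C_S[OF assms(1,2)] assms
  by (cases "t < Sfun \<phi>"; cases "t = Sfun \<phi>") auto

lemma C1inv_eq:
  assumes "pi/2 < \<phi>" "\<phi> < pi" "0 \<le> t" "t \<le> Sfun \<phi>" "Cfun t \<phi> = r"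
  shows "C1inv r \<phi> = t"
  unfolding C1inv_def
proof (rule the_equality)
  show "0 \<le> t \<and> t \<le> Sfun \<phi> \<and> Cfun t \<phi> = r" using assms by auto
next
  fix u assume u: "0 \<le> u \<and> u \<le> Sfun \<phi> \<and> Cfun u \<phi> = r"
  show "u = t"
  proof (rule ccontr)
    assume "u \<noteq> t"
    then consider "u < t" | "t < u" by linarith
    then show False
      by cases (use C_inc[OF assms(1,2), of u t] C_inc[OF assms(1,2), of t u] u assms in auto)
  qed
qed

lemma C2inv_eq:
  assumes "pi/2 < \<phi>" "\<phi> < pi" "Sfun \<phi> \<le> t" "t < \<phi>" "Cfun t \<phi> = r"
  shows "C2inv r \<phi> = t"
  unfolding C2inv_def
proof (rule the_equality)
  show "Sfun \<phi> \<le> t \<and> t < \<phi> \<and> Cfun t \<phi> = r" using assms by auto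
next
  fix u assume u: "Sfun \<phi> \<le> u \<and> u < \<phi> \<and> Cfun u \<phi> = r"
  show "u = t"
  proof (rule ccontr)
    assume "u \<noteq> t"
    then consider "u < t" | "t < u" by linarith
    then show False
      by cases (use C_dec[OF assms(1,2), of u t] C_dec[OF assms(1,2), of t u] u assms in auto)
  qed
qed

lemma C_unbounded:
  assumes "pi/2 < \<phi>" "\<phi> < pi" "0 < b"
  shows "\<exists>t. \<phi> - pi/2 < t \<and> t < \<phi> \<and> Cfun t \<phi> \<le> - b"
proof -
  define x where "x = 1 / (4 * (b + 1))"
  have x0: "0 < x" "x \<le> 1/4" using assms by (auto simp: x_def field_simps)
  have pi3: "3 < pi" using pi_gt3 .
  have sx: "0 < sin x" using x0 pi3 by (intro sin_gt_zero) auto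
  have sxx: "sin x \<le> x" using x0 by (intro sin_x_le_x) auto
  have cx: "1/2 \<le> cos x"
    using cos_mono_le_eq[of x "pi/3"] x0 pi3 cos_60 by auto
  define t where "t = \<phi> - x"
  have t1: "1 \<le> t" using assms x0 pi3 by (auto simp: t_def)
  have Ct: "Cfun t \<phi> = - (t * cos x / sin x)"
    by (simp add: Cfun_def cot_def t_def)
  have "(1/2) / x \<le> cos x / sin x"
    using sx sxx cx x0 by (intro frac_le) auto
  also have "(1/2) / x = 2 * (b + 1)" using assms by (simp add: x_def field_simps)
  finally have "2 * (b+1) \<le> cos x / sin x" .
  moreover have "cos x / sin x \<le> t * (cos x / sin x)"
    using t1 \<open>2 * (b+1) \<le> cos x / sin x\<close> assms
    by (metis mult_le_cancel_right1 less_le_trans mult_pos_pos order.strict_iff_not zero_less_numeral le_add_same_cancel2 less_eq_real_def add_pos_pos zero_less_one)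
  ultimately have "b \<le> t * cos x / sin x" using assms by auto
  then show ?thesis using Ct x0 pi3 by (intro exI[of _ t]) (auto simp: t_def)
qed

lemma cmp_pos:
  assumes "a > 0" "r * cos x = a" "\<rho> * cos y = a" "r > 0" "\<rho> > 0"
    "0 \<le> x" "x \<le> pi" "0 \<le> y" "y \<le> pi"
  shows "r < \<rho> \<longleftrightarrow> x < y"
proof -
  have cx: "cos x = a / r" "cos y = a / \<rho>" using assms by (auto simp: field_simps)
  have "r < \<rho> \<longleftrightarrow> a / \<rho> < a / r" using assms by (simp add: divide_strict_left_mono frac_less2 field_simps)
  also have "\<dots> \<longleftrightarrow> cos y < cos x" using cx by simp
  also have "\<dots> \<longleftrightarrow> x < y" using assms by (intro cos_mono_less_eq) auto
  finally show ?thesis .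
qed

lemma cmp_neg:
  assumes "a < 0" "r * cos x = a" "\<rho> * cos y = a" "r > 0" "\<rho> > 0"
    "0 \<le> x" "x \<le> pi" "0 \<le> y" "y \<le> pi"
  shows "r < \<rho> \<longleftrightarrow> y < x"
proof -
  have cx: "cos x = a / r" "cos y = a / \<rho>" using assms by (auto simp: field_simps)
  have "r < \<rho> \<longleftrightarrow> a / r < a / \<rho>" using assms by (simp add: field_simps)
  also have "\<dots> \<longleftrightarrow> cos x < cos y" using cx by simp
  also have "\<dots> \<longleftrightarrow> y < x" using assms by (intro cos_mono_less_eq) auto
  finally show ?thesis .
qed

lemma Rprops:
  assumes "\<phi> < pi" "0 < t" "t < \<phi>"
  shows "- t / sin (t - \<phi>) > 0" "(- t / sin (t - \<phi>)) * cos (\<phi> - t) = - Cfun t \<phi>"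
proof -
  have s: "sin (t - \<phi>) < 0" using sin_tphi_neg[of \<phi> t] assms by auto
  then show "- t / sin (t - \<phi>) > 0" using assms by (simp add: divide_pos_neg)
  show "(- t / sin (t - \<phi>)) * cos (\<phi> - t) = - Cfun t \<phi>"
    using s cos_minus[of "t - \<phi>"] by (simp add: Cfun_def cot_def)
qed

lemma core:
  assumes phi: "pi/2 < \<phi>" "\<phi> < pi" and r: "0 < r" and psi: "0 < \<psi>" "\<psi> < \<phi>"
    and a: "a = r * cos \<psi>"
  shows "(\<phi> - \<psi> > r * sin \<psi>) \<longleftrightarrow>
           ((a \<ge> 0 \<and> r < R2 (-a) \<phi>) \<or>
            (- Mfun \<phi> < a \<and> a < 0 \<and> R1 (-a) \<phi> < r \<and> r < R2 (-a) \<phi>))"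
proof -
  define \<theta> where "\<theta> = \<phi> - \<psi>"
  note S = S_props[OF phi]
  have th: "0 < \<theta>" "\<theta> < \<phi>" using psi by (auto simp: \<theta>_def)
  have sp: "sin \<psi> > 0" using psi phi by (intro sin_gt_zero) auto
  have Cth: "Cfun \<theta> \<phi> = - (\<theta> * cos \<psi> / sin \<psi>)"
    by (simp add: Cfun_def cot_def \<theta>_def)
  have Mnn: "Mfun \<phi> \<ge> 0" by (simp add: Mfun_def)
  have CSM: "Cfun (Sfun \<phi>) \<phi> = Mfun \<phi>" using C_S[OF phi] .
  have Sh: "Sfun \<phi> < \<phi> - pi/2" using S_lt_half[OF phi] .
  have contS: "\<And>u. u < \<phi> \<Longrightarrow> continuous_on {Sfun \<phi>..u} (\<lambda>u. Cfun u \<phi>)"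
    using S phi by (intro C_cont) auto
  consider "a > 0" | "a = 0" | "a < 0" by linarith
  then show ?thesis
  proof cases
    case 1
    then have cp: "cos \<psi> > 0" using a r by (simp add: zero_less_mult_iff)
    have L: "(\<theta> > r * sin \<psi>) \<longleftrightarrow> Cfun \<theta> \<phi> < -a"
    proof -
      have "Cfun \<theta> \<phi> < -a \<longleftrightarrow> r * cos \<psi> < \<theta> * cos \<psi> / sin \<psi>" using Cth a by auto
      also have "\<dots> \<longleftrightarrow> r * cos \<psi> * sin \<psi> < \<theta> * cos \<psi>" using sp by (simp add: pos_less_divide_eq)
      also have "\<dots> \<longleftrightarrow> r * sin \<psi> < \<theta>" using cp by (simp add: mult.commute mult.left_commute)
      finally show ?thesis by simp
    qed
    obtain t where t: "\<phi> - pi/2 < t" "t < \<phi>" "Cfun t \<phi> \<le> -a" using C_unbounded[OF phi 1] by auto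
    obtain t2 where t2: "Sfun \<phi> \<le> t2" "t2 \<le> t" "Cfun t2 \<phi> = -a"
      using IVT2'[of "\<lambda>u. Cfun u \<phi>" t "-a" "Sfun \<phi>", OF t(3)] CSM Mnn 1 Sh t contS[of t] by auto
    have t2b: "0 < t2" "t2 < \<phi>" using t2 t S by auto
    have C2: "C2inv (-a) \<phi> = t2" using C2inv_eq[OF phi t2(1) t2b(2) t2(3)] .
    define \<rho> where "\<rho> = - t2 / sin (t2 - \<phi>)"
    have R2e: "R2 (-a) \<phi> = \<rho>" by (simp add: R2_def C2 \<rho>_def)
    have rho: "\<rho> > 0" "\<rho> * cos (\<phi> - t2) = a" using Rprops[OF phi(2) t2b] t2 by (auto simp: \<rho>_def)
    have "r < \<rho> \<longleftrightarrow> \<psi> < \<phi> - t2"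
      using cmp_pos[OF 1 a[symmetric] rho(2) r rho(1)] psi phi t2b by auto
    also have "\<dots> \<longleftrightarrow> t2 < \<theta>" by (auto simp: \<theta>_def)
    also have "\<dots> \<longleftrightarrow> Cfun \<theta> \<phi> < -a"
    proof (cases "\<theta> \<le> Sfun \<phi>")
      case True
      then show ?thesis using C_nonneg[OF phi, of \<theta>] th t2 1 by auto
    next
      case False
      then show ?thesis using C_dec[OF phi, of t2 \<theta>] C_dec[OF phi, of \<theta> t2] th t2 t2b
        by (cases "t2 < \<theta>"; cases "t2 = \<theta>") auto
    qed
    finally show ?thesis using L R2e 1 by (auto simp: \<theta>_def)
  next
    case 2
    then have "cos \<psi> = 0" using a r by simp
    then have ps: "\<psi> = pi/2" using arccos_cos[of \<psi>] psi phi by auto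
    have C2: "C2inv (-a) \<phi> = \<phi> - pi/2" using C2inv_eq[OF phi, of "\<phi> - pi/2"] Sh C_half 2 by auto
    have "R2 (-a) \<phi> = \<phi> - pi/2" by (simp add: R2_def C2)
    then show ?thesis using 2 unfolding ps by auto
  next
    case 3
    then have cn: "cos \<psi> < 0" using a r by (simp add: mult_less_0_iff)
    have L: "(\<theta> > r * sin \<psi>) \<longleftrightarrow> Cfun \<theta> \<phi> > -a"
    proof -
      have "Cfun \<theta> \<phi> > -a \<longleftrightarrow> \<theta> * cos \<psi> / sin \<psi> < r * cos \<psi>" using Cth a by auto
      also have "\<dots> \<longleftrightarrow> \<theta> * cos \<psi> < r * cos \<psi> * sin \<psi>" using sp by (simp add: divide_less_eq)
      also have "\<dots> \<longleftrightarrow> r * sin \<psi> < \<theta>" using cn by (simp add: mult.commute mult.left_commute)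
      finally show ?thesis by simp
    qed
    show ?thesis
    proof (cases "- a < Mfun \<phi>")
      case False
      have "Cfun \<theta> \<phi> \<le> Mfun \<phi>" using C_le_M[OF phi, of \<theta>] th by auto
      then show ?thesis using L False 3 by (auto simp: \<theta>_def)
    next
      case True
      have cont1: "continuous_on {0..Sfun \<phi>} (\<lambda>u. Cfun u \<phi>)" using S phi by (intro C_cont) auto
      obtain t1 where t1: "0 \<le> t1" "t1 \<le> Sfun \<phi>" "Cfun t1 \<phi> = -a"
        using IVT'[of "\<lambda>u. Cfun u \<phi>" 0 "-a" "Sfun \<phi>"] C0 CSM True 3 S cont1 by force
      obtain t2 where t2: "Sfun \<phi> \<le> t2" "t2 \<le> \<phi> - pi/2" "Cfun t2 \<phi> = -a"
        using IVT2'[of "\<lambda>u. Cfun u \<phi>" "\<phi> - pi/2" "-a" "Sfun \<phi>"] C_half CSM True 3 Sh contS[of "\<phi> - pi/2"]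
        by force
      have "t1 \<noteq> 0" using t1 3 C0[of \<phi>] by auto
      then have t1b: "0 < t1" "t1 < \<phi>" using t1 S by auto
      have t2b: "0 < t2" "t2 < \<phi>" using t2(1,2) S(1) pi_gt_zero by linarith+
      have C1: "C1inv (-a) \<phi> = t1" using C1inv_eq[OF phi t1] .
      have C2: "C2inv (-a) \<phi> = t2" using C2inv_eq[OF phi t2(1) t2b(2) t2(3)] .
      define \<rho>1 where "\<rho>1 = - t1 / sin (t1 - \<phi>)"
      define \<rho>2 where "\<rho>2 = - t2 / sin (t2 - \<phi>)"
      have R1e: "R1 (-a) \<phi> = \<rho>1" by (simp add: R1_def C1 \<rho>1_def)
      have R2e: "R2 (-a) \<phi> = \<rho>2" by (simp add: R2_def C2 \<rho>2_def)
      have rho1: "\<rho>1 > 0" "\<rho>1 * cos (\<phi> - t1) = a" using Rprops[OF phi(2) t1b] t1 by (auto simp: \<rho>1_def)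
      have rho2: "\<rho>2 > 0" "\<rho>2 * cos (\<phi> - t2) = a" using Rprops[OF phi(2) t2b] t2 by (auto simp: \<rho>2_def)
      have e2: "r < \<rho>2 \<longleftrightarrow> \<theta> < t2"
        using cmp_neg[OF 3 a[symmetric] rho2(2) r rho2(1)] psi phi t2b by (auto simp: \<theta>_def)
      have e1: "\<rho>1 < r \<longleftrightarrow> t1 < \<theta>"
        using cmp_neg[OF 3 rho1(2) a[symmetric] rho1(1) r] psi phi t1b by (auto simp: \<theta>_def)
      have "Cfun \<theta> \<phi> > -a \<longleftrightarrow> t1 < \<theta> \<and> \<theta> < t2"
      proof (cases "\<theta> \<le> Sfun \<phi>")
        case True
        then show ?thesis using C_inc[OF phi, of t1 \<theta>] C_inc[OF phi, of \<theta> t1] th t1 t2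
          by (cases "t1 < \<theta>"; cases "t1 = \<theta>"; cases "\<theta> = t2") auto
      next
        case False
        then show ?thesis using C_dec[OF phi, of t2 \<theta>] C_dec[OF phi, of \<theta> t2] th t2 t2b t1
          by (cases "t2 < \<theta>"; cases "t2 = \<theta>") auto
      qed
      then show ?thesis using L e1 e2 R1e R2e True 3 by (auto simp: \<theta>_def)
    qed
  qed
qed

theorem mainTheorem15:
  fixes a :: real and w :: complex
  assumes "Im w \<noteq> 0"
    and "(a, w) \<in> Dc"
    and "pi / 2 < \<bar>Arg w\<bar>" and "\<bar>Arg w\<bar> < pi"
  shows "tau_c a w > 1 \<longleftrightarrow>
           ((a \<ge> 0 \<and> cmod w < R2 (-a) \<bar>Arg w\<bar>) \<or>
            (- Mfun \<bar>Arg w\<bar> < a \<and> a < 0 \<and>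
             R1 (-a) \<bar>Arg w\<bar> < cmod w \<and> cmod w < R2 (-a) \<bar>Arg w\<bar>))"
proof -
  define \<phi> where "\<phi> = \<bar>Arg w\<bar>"
  define r where "r = cmod w"
  have phi: "pi/2 < \<phi>" "\<phi> < pi" using assms by (auto simp: \<phi>_def)
  have w0: "w \<noteq> 0" and aw: "Re w < a" "a < r" using assms(2) by (auto simp: Dc_def r_def)
  have r0: "r > 0" using w0 by (simp add: r_def)
  have cphi: "cos \<phi> = cos (Arg w)" by (simp add: \<phi>_def abs_if)
  have Rew: "Re w = r * cos \<phi>" using cos_Arg[OF w0] cphi r0 by (simp add: r_def field_simps)
  have cp1: "cos pi < cos \<phi>" using phi by (intro cos_monotone_0_pi) auto
  have ar1: "cos \<phi> < a / r" using aw Rew r0 by (simp add: field_simps mult.commute)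
  have ar2: "a / r < 1" using aw r0 by (simp add: field_simps)
  have ar0: "-1 < a / r" using ar1 cp1 by simp
  define \<psi> where "\<psi> = arccos (a / r)"
  have psb: "0 < \<psi>" "\<psi> < pi" using arccos_lt_bounded[OF ar0 ar2] by (auto simp: \<psi>_def)
  have cps: "cos \<psi> = a / r" using ar0 ar2 by (simp add: \<psi>_def)
  have "\<psi> < \<phi>" using cos_mono_less_eq[of \<phi> \<psi>] psb phi ar1 cps by auto
  have a: "a = r * cos \<psi>" using cps r0 by (simp add: field_simps)
  have sp: "sin \<psi> > 0" using psb by (intro sin_gt_zero) auto
  have "r\<^sup>2 - a\<^sup>2 = (r * sin \<psi>)\<^sup>2"
  proof -
    have e: "r\<^sup>2 * (cos \<psi>)\<^sup>2 + r\<^sup>2 * (sin \<psi>)\<^sup>2 = r\<^sup>2"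
      by (metis distrib_left mult.right_neutral sin_cos_squared_add add.commute)
    show ?thesis using a e by (simp add: power_mult_distrib algebra_simps)
  qed
  then have sq: "sqrt (r\<^sup>2 - a\<^sup>2) = r * sin \<psi>" using r0 sp by simp
  have tau: "tau_c a w = (\<phi> - \<psi>) / (r * sin \<psi>)"
    by (simp add: tau_c_def sq \<psi>_def \<phi>_def r_def[symmetric])
  have "tau_c a w > 1 \<longleftrightarrow> \<phi> - \<psi> > r * sin \<psi>"
    using r0 sp by (simp add: tau)
  also have "\<dots> \<longleftrightarrow> ((a \<ge> 0 \<and> r < R2 (-a) \<phi>) \<or>
            (- Mfun \<phi> < a \<and> a < 0 \<and> R1 (-a) \<phi> < r \<and> r < R2 (-a) \<phi>))"
    by (rule core[OF phi r0 psb(1) \<open>\<psi> < \<phi>\<close> a])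
  finally show ?thesis by (simp add: \<phi>_def r_def)
qed

end
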